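(* Let $M=\{x_i,y_i,u_i^j,v_i^j: i\in\{1,2,3\},\ j\in\mathbb N\}$ (all these points distinct) be the metric space in which $d(y_1,x_2)=d(y_2,x_3)=d(y_3,x_1)=1$, $d(x_i,u_i^j)=d(u_i^j,v_i^j)=d(v_i^j,y_i)=1$ for all $i\in\{1,2,3\}$ and $j\in\mathbb N$, and the distance between any two other distinct points is $2$; choose any base point in $M$. Then $\mathrm{Lip}_0(M)$ has the LD2P but does not have the $w^*$-D2P (and hence does not have the D2P).
   Context: $\mathrm{Lip}_0(M)$ is the real Banach space of Lipschitz $f\colon M\to\mathbb R$ vanishing at the base point, normed by the best Lipschitz constant; it is the dual of the Lipschitz-free space $\mathcal F(M)$ (norm-closed span of point evaluations in $\mathrm{Lip}_0(M)^*$), which defines its weak-star topology. A Banach space $X$ has the LD2P if every slice $\{x\in B_X:x^*(x)>1-\alpha\}$ ($\|x^*\|=1$, $\alpha>0$) of the unit ball $B_X$ has diameter $2$; it has the D2P if every nonempty relatively weakly open subset of $B_X$ has diameter $2$; a dual space has the $w^*$-D2P if every nonempty relatively weak-star open subset of $B_X$ has diameter $2$. *)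

theory Defs
  imports "HOL-Analysis.Analysis"
begin

datatype idx = I1 | I2 | I3

fun nxt :: "idx \<Rightarrow> idx" where
  "nxt I1 = I2" | "nxt I2 = I3" | "nxt I3 = I1"

datatype pt = X idx | Y idx | U idx nat | V idx nat

definition edge :: "pt \<Rightarrow> pt \<Rightarrow> bool" where
  "edge p q \<longleftrightarrow>
     (\<exists>i. {p, q} = {Y i, X (nxt i)}) \<or>
     (\<exists>i j. {p, q} = {X i, U i j}) \<or>
     (\<exists>i j. {p, q} = {U i j, V i j}) \<or>
     (\<exists>i j. {p, q} = {V i j, Y i})"

definition d :: "pt \<Rightarrow> pt \<Rightarrow> real" where
  "d p q = (if p = q then 0 else if edge p q then 1 else 2)"

definition lipnorm :: "(pt \<Rightarrow> real) \<Rightarrow> real" where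
  "lipnorm f = Sup {\<bar>f p - f q\<bar> / d p q | p q. p \<noteq> q}"

definition Lip0 :: "pt \<Rightarrow> (pt \<Rightarrow> real) set" where
  "Lip0 p0 = {f. f p0 = 0 \<and> bdd_above {\<bar>f p - f q\<bar> / d p q | p q. p \<noteq> q}}"

definition Ball0 :: "pt \<Rightarrow> (pt \<Rightarrow> real) set" where
  "Ball0 p0 = {f \<in> Lip0 p0. lipnorm f \<le> 1}"

definition diam0 :: "(pt \<Rightarrow> real) set \<Rightarrow> real" where
  "diam0 S = Sup {lipnorm (\<lambda>x. f x - g x) | f g. f \<in> S \<and> g \<in> S}"

definition is_dual :: "pt \<Rightarrow> ((pt \<Rightarrow> real) \<Rightarrow> real) \<Rightarrow> bool" where
  "is_dual p0 \<phi> \<longleftrightarrow>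
     (\<forall>f\<in>Lip0 p0. \<forall>g\<in>Lip0 p0. \<phi> (\<lambda>x. f x + g x) = \<phi> f + \<phi> g) \<and>
     (\<forall>f\<in>Lip0 p0. \<forall>c::real. \<phi> (\<lambda>x. c * f x) = c * \<phi> f) \<and>
     (\<exists>C. \<forall>f\<in>Lip0 p0. \<bar>\<phi> f\<bar> \<le> C * lipnorm f)"

definition dualnorm :: "pt \<Rightarrow> ((pt \<Rightarrow> real) \<Rightarrow> real) \<Rightarrow> real" where
  "dualnorm p0 \<phi> = Sup {\<bar>\<phi> f\<bar> | f. f \<in> Ball0 p0}"

text \<open>The Lipschitz-free space: norm-closed span of the point evaluations in Lip_0(M)^*.\<close>
definition span_evals :: "((pt \<Rightarrow> real) \<Rightarrow> real) set" where
  "span_evals = {(\<lambda>f. \<Sum>p\<in>P. c p * f p) | P c. finite P}"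

definition Free :: "pt \<Rightarrow> ((pt \<Rightarrow> real) \<Rightarrow> real) set" where
  "Free p0 = {\<phi>. is_dual p0 \<phi> \<and>
     (\<forall>\<epsilon>>0. \<exists>\<psi>\<in>span_evals. dualnorm p0 (\<lambda>f. \<phi> f - \<psi> f) < \<epsilon>)}"

definition LD2P :: "pt \<Rightarrow> bool" where
  "LD2P p0 \<longleftrightarrow> (\<forall>\<phi> \<alpha>. is_dual p0 \<phi> \<and> dualnorm p0 \<phi> = 1 \<and> \<alpha> > 0 \<longrightarrow>
      diam0 {f \<in> Ball0 p0. \<phi> f > 1 - \<alpha>} = 2)"

text \<open>W is relatively open in the unit ball for the weak topology induced by the
  family of functionals Psi (via the standard neighbourhood basis).\<close>
definition rel_open_in_ball :: "pt \<Rightarrow> ((pt \<Rightarrow> real) \<Rightarrow> real) set \<Rightarrow> (pt \<Rightarrow> real) set \<Rightarrow> bool" where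
  "rel_open_in_ball p0 \<Psi> W \<longleftrightarrow> W \<subseteq> Ball0 p0 \<and>
     (\<forall>f\<in>W. \<exists>\<Phi> \<epsilon>. finite \<Phi> \<and> \<Phi> \<subseteq> \<Psi> \<and> \<epsilon> > 0 \<and>
        {g \<in> Ball0 p0. \<forall>\<phi>\<in>\<Phi>. \<bar>\<phi> g - \<phi> f\<bar> < \<epsilon>} \<subseteq> W)"

definition D2P :: "pt \<Rightarrow> bool" where
  "D2P p0 \<longleftrightarrow> (\<forall>W. rel_open_in_ball p0 {\<phi>. is_dual p0 \<phi>} W \<and> W \<noteq> {} \<longrightarrow> diam0 W = 2)"

definition wstar_D2P :: "pt \<Rightarrow> bool" where
  "wstar_D2P p0 \<longleftrightarrow> (\<forall>W. rel_open_in_ball p0 (Free p0) W \<and> W \<noteq> {} \<longrightarrow> diam0 W = 2)"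

end

theory Submission
  imports Defs
begin

lemma edge_sym: "edge p q = edge q p"
  unfolding edge_def by (auto simp: insert_commute)
lemma edge_X: "edge (X i) q \<longleftrightarrow> (\<exists>j. q = U i j) \<or> (\<exists>k. i = nxt k \<and> q = Y k)"
  unfolding edge_def by (auto simp: doubleton_eq_iff)
lemma edge_Y: "edge (Y i) q \<longleftrightarrow> q = X (nxt i) \<or> (\<exists>j. q = V i j)"
  unfolding edge_def by (auto simp: doubleton_eq_iff)
lemma edge_U: "edge (U i j) q \<longleftrightarrow> q = X i \<or> q = V i j"
  unfolding edge_def by (auto simp: doubleton_eq_iff)
lemma edge_V: "edge (V i j) q \<longleftrightarrow> q = U i j \<or> q = Y i"
  unfolding edge_def by (auto simp: doubleton_eq_iff)
lemma edge_irrefl: "\<not> edge p p"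
  unfolding edge_def by (auto simp: doubleton_eq_iff)

lemma d_refl[simp]: "d p p = 0" by (simp add: d_def)
lemma d_sym: "d p q = d q p" by (simp add: d_def edge_sym eq_commute)
lemma d_ge1: "p \<noteq> q \<Longrightarrow> 1 \<le> d p q" by (simp add: d_def)
lemma d_le2: "d p q \<le> 2" by (simp add: d_def)
lemma d_ge0: "0 \<le> d p q" by (simp add: d_def)
lemma d_cases: "d p q = 0 \<or> d p q = 1 \<or> d p q = 2" by (simp add: d_def)
lemma d_nonedge: "p \<noteq> q \<Longrightarrow> \<not> edge p q \<Longrightarrow> d p q = 2" by (simp add: d_def)
lemma d_edge: "edge p q \<Longrightarrow> d p q = 1" by (auto simp: d_def edge_irrefl)

lemma Lip0_iff: "f \<in> Lip0 p0 \<longleftrightarrow> f p0 = 0 \<and> (\<exists>B. \<forall>p. \<bar>f p\<bar> \<le> B)"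
proof
  assume "f \<in> Lip0 p0"
  then have f0: "f p0 = 0" and bdd: "bdd_above {\<bar>f p - f q\<bar> / d p q | p q. p \<noteq> q}"
    by (auto simp: Lip0_def)
  then obtain S where S: "\<And>x. x \<in> {\<bar>f p - f q\<bar> / d p q | p q. p \<noteq> q} \<Longrightarrow> x \<le> S"
    by (auto simp: bdd_above_def)
  have "\<bar>f p\<bar> \<le> 2 * \<bar>S\<bar>" for p
  proof (cases "p = p0")
    case True then show ?thesis using f0 by simp
  next
    case False
    have "\<bar>f p - f p0\<bar> / d p p0 \<le> S" using S False by blast
    moreover have "d p p0 > 0" using d_ge1[OF False] by simp
    ultimately have "\<bar>f p - f p0\<bar> \<le> S * d p p0" by (simp add: divide_le_eq)
    also have "\<dots> \<le> \<bar>S\<bar> * 2" using d_le2[of p p0] d_ge0[of p p0]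
      by (meson abs_ge_self abs_ge_zero mult_mono order_trans mult_right_mono)
    finally show ?thesis using f0 by simp
  qed
  then show "f p0 = 0 \<and> (\<exists>B. \<forall>p. \<bar>f p\<bar> \<le> B)" using f0 by blast
next
  assume "f p0 = 0 \<and> (\<exists>B. \<forall>p. \<bar>f p\<bar> \<le> B)"
  then obtain B where f0: "f p0 = 0" and B: "\<And>p. \<bar>f p\<bar> \<le> B" by blast
  have "\<bar>f p - f q\<bar> / d p q \<le> 2 * B" if "p \<noteq> q" for p q
  proof -
    have "\<bar>f p - f q\<bar> \<le> 2 * B" using B[of p] B[of q] by linarith
    moreover have "d p q \<ge> 1" using d_ge1[OF that] .
    moreover have B0: "0 \<le> B" using B[of p] by linarith
    moreover have "2*B*1 \<le> 2*B*d p q" using B0 \<open>d p q \<ge> 1\<close> by (intro mult_left_mono) auto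
    ultimately show ?thesis using \<open>d p q \<ge> 1\<close> by (simp add: divide_le_eq)
  qed
  then have "bdd_above {\<bar>f p - f q\<bar> / d p q | p q. p \<noteq> q}"
    by (auto simp: bdd_above_def)
  then show "f \<in> Lip0 p0" using f0 by (simp add: Lip0_def)
qed

lemma ratio_ne: "{\<bar>f p - f q\<bar> / d p q | p q. p \<noteq> q} \<noteq> {}"
proof -
  have "X I1 \<noteq> Y I1" by simp
  then show ?thesis by blast
qed

lemma lip_le: "f \<in> Lip0 p0 \<Longrightarrow> \<bar>f p - f q\<bar> \<le> lipnorm f * d p q"
proof (cases "p = q")
  case False
  assume "f \<in> Lip0 p0"
  then have bdd: "bdd_above {\<bar>f p - f q\<bar> / d p q | p q. p \<noteq> q}" by (simp add: Lip0_def)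
  have "\<bar>f p - f q\<bar> / d p q \<le> lipnorm f" unfolding lipnorm_def
    by (rule cSup_upper[OF _ bdd]) (use False in blast)
  moreover have "d p q > 0" using d_ge1[OF False] by simp
  ultimately show ?thesis by (simp add: divide_le_eq)
qed simp

lemma lipnorm_ge0: "f \<in> Lip0 p0 \<Longrightarrow> 0 \<le> lipnorm f"
  using lip_le[of f p0 "X I1" "Y I1"] by (simp add: d_def edge_def doubleton_eq_iff)

lemma lipnorm_le: "(\<And>p q. p \<noteq> q \<Longrightarrow> \<bar>f p - f q\<bar> \<le> K * d p q) \<Longrightarrow> lipnorm f \<le> K"
  unfolding lipnorm_def
proof (rule cSup_least[OF ratio_ne])
  fix x assume A: "\<And>p q. p \<noteq> q \<Longrightarrow> \<bar>f p - f q\<bar> \<le> K * d p q"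
    and "x \<in> {\<bar>f p - f q\<bar> / d p q | p q. p \<noteq> q}"
  then obtain p q where x: "x = \<bar>f p - f q\<bar> / d p q" and pq: "p \<noteq> q" by blast
  have "d p q > 0" using d_ge1[OF pq] by simp
  then show "x \<le> K" using A[OF pq] x by (simp add: divide_le_eq)
qed

lemma Ball0_I: "f p0 = 0 \<Longrightarrow> (\<And>p q. \<bar>f p - f q\<bar> \<le> d p q) \<Longrightarrow> f \<in> Ball0 p0"
proof -
  assume f0: "f p0 = 0" and L: "\<And>p q. \<bar>f p - f q\<bar> \<le> d p q"
  have "\<bar>f p\<bar> \<le> 2" for p using L[of p p0] f0 d_le2[of p p0] by simp
  then have "f \<in> Lip0 p0" using f0 by (auto simp: Lip0_iff)
  moreover have "lipnorm f \<le> 1" using L by (intro lipnorm_le) simp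
  ultimately show ?thesis by (simp add: Ball0_def)
qed

lemma Ball0_D: "f \<in> Ball0 p0 \<Longrightarrow> \<bar>f p - f q\<bar> \<le> d p q"
proof -
  assume "f \<in> Ball0 p0"
  then have "f \<in> Lip0 p0" "lipnorm f \<le> 1" by (auto simp: Ball0_def)
  moreover have "lipnorm f * d p q \<le> 1 * d p q"
    using \<open>lipnorm f \<le> 1\<close> d_ge0[of p q] by (intro mult_right_mono) auto
  ultimately show ?thesis using lip_le[of f p0 p q] by simp
qed

lemma Ball0_p0: "f \<in> Ball0 p0 \<Longrightarrow> f p0 = 0" by (simp add: Ball0_def Lip0_def)



lemma Lip0_add: "f \<in> Lip0 p0 \<Longrightarrow> g \<in> Lip0 p0 \<Longrightarrow> (\<lambda>x. f x + g x) \<in> Lip0 p0"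
proof -
  assume "f \<in> Lip0 p0" "g \<in> Lip0 p0"
  then obtain A B where "f p0 = 0" "g p0 = 0" "\<And>p. \<bar>f p\<bar> \<le> A" "\<And>p. \<bar>g p\<bar> \<le> B"
    by (auto simp: Lip0_iff)
  then show ?thesis unfolding Lip0_iff
    by (intro conjI exI[of _ "A + B"]) (auto intro: order_trans[OF abs_triangle_ineq] add_mono)
qed

lemma Lip0_zero: "(\<lambda>x. 0) \<in> Lip0 p0" by (auto simp: Lip0_iff)

lemma dual_add: "is_dual p0 \<phi> \<Longrightarrow> f \<in> Lip0 p0 \<Longrightarrow> g \<in> Lip0 p0 \<Longrightarrow> \<phi> (\<lambda>x. f x + g x) = \<phi> f + \<phi> g"
  by (simp add: is_dual_def)

lemma dual_smult: "is_dual p0 \<phi> \<Longrightarrow> f \<in> Lip0 p0 \<Longrightarrow> \<phi> (\<lambda>x. c * f x) = c * \<phi> f"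
  by (simp add: is_dual_def)

lemma dual_zero: "is_dual p0 \<phi> \<Longrightarrow> \<phi> (\<lambda>x. 0) = 0"
  using dual_smult[of p0 \<phi> "\<lambda>x. 0" 0] Lip0_zero by simp

lemma dual_bound: "is_dual p0 \<phi> \<Longrightarrow> \<exists>C\<ge>0. \<forall>f\<in>Lip0 p0. \<bar>\<phi> f\<bar> \<le> C * lipnorm f"
proof -
  assume "is_dual p0 \<phi>"
  then obtain C where C: "\<forall>f\<in>Lip0 p0. \<bar>\<phi> f\<bar> \<le> C * lipnorm f" by (auto simp: is_dual_def)
  have "\<forall>f\<in>Lip0 p0. \<bar>\<phi> f\<bar> \<le> max C 0 * lipnorm f"
  proof
    fix f assume f: "f \<in> Lip0 p0"
    have "C * lipnorm f \<le> max C 0 * lipnorm f" using lipnorm_ge0[OF f]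
      by (intro mult_right_mono) auto
    then show "\<bar>\<phi> f\<bar> \<le> max C 0 * lipnorm f" using C f by force
  qed
  then show ?thesis by (intro exI[of _ "max C 0"]) auto
qed

lemma dual_sum:
  assumes phi: "is_dual p0 \<phi>" and fin: "finite J"
  shows "(\<forall>j\<in>J. F j \<in> Lip0 p0) \<Longrightarrow>
     (\<lambda>p. \<Sum>j\<in>J. F j p) \<in> Lip0 p0 \<and> \<phi> (\<lambda>p. \<Sum>j\<in>J. F j p) = (\<Sum>j\<in>J. \<phi> (F j))"
  using fin
proof (induction J rule: finite_induct)
  case empty
  then show ?case using Lip0_zero dual_zero[OF phi] by simp
next
  case (insert x J)
  then have IH: "(\<lambda>p. \<Sum>j\<in>J. F j p) \<in> Lip0 p0" "\<phi> (\<lambda>p. \<Sum>j\<in>J. F j p) = (\<Sum>j\<in>J. \<phi> (F j))"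
    and Fx: "F x \<in> Lip0 p0" by auto
  have "(\<lambda>p. F x p + (\<Sum>j\<in>J. F j p)) \<in> Lip0 p0" by (rule Lip0_add[OF Fx IH(1)])
  moreover have "\<phi> (\<lambda>p. F x p + (\<Sum>j\<in>J. F j p)) = \<phi> (F x) + (\<Sum>j\<in>J. \<phi> (F j))"
    using dual_add[OF phi Fx IH(1)] IH(2) by simp
  ultimately show ?case using insert.hyps by simp
qed

lemma dual_abs_le: "is_dual p0 \<phi> \<Longrightarrow> dualnorm p0 \<phi> = 1 \<Longrightarrow> \<alpha> > 0 \<Longrightarrow>
   \<exists>f\<in>Ball0 p0. \<phi> f > 1 - \<alpha>"
proof (rule ccontr)
  assume phi: "is_dual p0 \<phi>" and n1: "dualnorm p0 \<phi> = 1" and a: "\<alpha> > 0"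
    and no: "\<not> (\<exists>f\<in>Ball0 p0. \<phi> f > 1 - \<alpha>)"
  have z: "(\<lambda>x. 0) \<in> Ball0 p0" by (rule Ball0_I) (auto simp: d_ge0)
  have "\<bar>\<phi> f\<bar> \<le> 1 - \<alpha>" if f: "f \<in> Ball0 p0" for f
  proof -
    have fl: "f \<in> Lip0 p0" using f by (simp add: Ball0_def)
    have "(\<lambda>x. (-1) * f x) \<in> Ball0 p0"
      using Ball0_D[OF f] Ball0_p0[OF f] by (intro Ball0_I) (auto simp: abs_minus_commute)
    then have "\<phi> (\<lambda>x. (-1) * f x) \<le> 1 - \<alpha>" using no by force
    then have "- \<phi> f \<le> 1 - \<alpha>" using dual_smult[OF phi fl, of "-1"] by simp
    moreover have "\<phi> f \<le> 1 - \<alpha>" using no f by force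
    ultimately show ?thesis by linarith
  qed
  then have "dualnorm p0 \<phi> \<le> 1 - \<alpha>" unfolding dualnorm_def
    by (intro cSup_least) (use z in auto)
  then show False using n1 a by simp
qed



fun f0 :: "pt \<Rightarrow> real" where
  "f0 (X I1) = 0" | "f0 (Y I1) = 5/4" | "f0 (X I2) = 3/4" | "f0 (Y I2) = 2"
| "f0 (X I3) = 3/2" | "f0 (Y I3) = 1/4"
| "f0 (U I1 j) = 1/2" | "f0 (V I1 j) = 3/4"
| "f0 (U I2 j) = 5/4" | "f0 (V I2 j) = 3/2"
| "f0 (U I3 j) = 1" | "f0 (V I3 j) = 3/4"

lemma f0_range: "0 \<le> f0 p \<and> f0 p \<le> 2"
  by (cases p rule: f0.cases) auto

lemma edge_cases:
  assumes "edge p q"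
  obtains i where "p = Y i" "q = X (nxt i)" | i where "q = Y i" "p = X (nxt i)"
  | i j where "p = X i" "q = U i j" | i j where "q = X i" "p = U i j"
  | i j where "p = U i j" "q = V i j" | i j where "q = U i j" "p = V i j"
  | i j where "p = V i j" "q = Y i" | i j where "q = V i j" "p = Y i"
  using assms unfolding edge_def by (auto simp: doubleton_eq_iff)

lemma f0_lip: "\<bar>f0 p - f0 q\<bar> \<le> d p q"
proof (cases "p = q")
  case False
  show ?thesis
  proof (cases "edge p q")
    case True
    then have "\<bar>f0 p - f0 q\<bar> \<le> 1"
      by (cases rule: edge_cases) (case_tac i; auto)+
    then show ?thesis using d_edge[OF True] by simp
  next
    case F: False
    show ?thesis using d_nonedge[OF False F] f0_range[of p] f0_range[of q] by (simp add: abs_le_iff)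
  qed
qed simp

definition Npts :: "pt set" where "Npts = {X I1, Y I1, X I2, Y I2, X I3, Y I3}"

definition ee :: real where "ee = 1/40"

definition WW :: "pt \<Rightarrow> (pt \<Rightarrow> real) set" where
  "WW p0 = {g \<in> Ball0 p0. \<forall>p\<in>Npts. \<bar>g p - (f0 p - f0 p0)\<bar> < ee}"

lemma WW_ne: "(\<lambda>p. f0 p - f0 p0) \<in> WW p0"
  unfolding WW_def ee_def using f0_lip by (auto intro!: Ball0_I simp: abs_minus_commute)

lemma WW_pt:
  assumes f: "f \<in> WW p0" and g: "g \<in> WW p0"
  shows "\<bar>f p - g p\<bar> \<le> 9/5"
proof -
  let ?t = "\<lambda>p. f0 p - f0 p0"
  have fB: "f \<in> Ball0 p0" and gB: "g \<in> Ball0 p0" using f g by (auto simp: WW_def)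
  have fN: "\<And>q. q \<in> Npts \<Longrightarrow> \<bar>f q - ?t q\<bar> < 1/40" using f by (auto simp: WW_def ee_def)
  have gN: "\<And>q. q \<in> Npts \<Longrightarrow> \<bar>g q - ?t q\<bar> < 1/40" using g by (auto simp: WW_def ee_def)
  note fL = Ball0_D[OF fB] and gL = Ball0_D[OF gB]
  have fN': "?t q - 1/40 < f q \<and> f q < ?t q + 1/40" if "q \<in> Npts" for q using fN[OF that] by arith
  have gN': "?t q - 1/40 < g q \<and> g q < ?t q + 1/40" if "q \<in> Npts" for q using gN[OF that] by arith
  show ?thesis
  proof (cases p)
    case (X i)
    then have "p \<in> Npts" by (cases i) (auto simp: Npts_def)
    then show ?thesis using fN[of p] gN[of p] by arith
  next
    case (Y i)
    then have "p \<in> Npts" by (cases i) (auto simp: Npts_def)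
    then show ?thesis using fN[of p] gN[of p] by arith
  next
    case (U i j)
    show ?thesis
    proof (cases i)
      case I1
      have "d p (X i) = 1" "d p (Y i) = 2" using U I1 by (auto simp: d_def edge_U)
      then show ?thesis unfolding abs_le_iff using fL[of p "X i"] gL[of p "X i"] fL[of p "Y i"] gL[of p "Y i"]
        fN'[of "X i"] gN'[of "X i"] fN'[of "Y i"] gN'[of "Y i"] U I1 by (simp add: Npts_def abs_le_iff)
    next
      case I2
      have "d p (X i) = 1" "d p (Y i) = 2" using U I2 by (auto simp: d_def edge_U)
      then show ?thesis unfolding abs_le_iff using fL[of p "X i"] gL[of p "X i"] fL[of p "Y i"] gL[of p "Y i"]
        fN'[of "X i"] gN'[of "X i"] fN'[of "Y i"] gN'[of "Y i"] U I2 by (simp add: Npts_def abs_le_iff)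
    next
      case I3
      have "d p (X i) = 1" "d p (Y i) = 2" using U I3 by (auto simp: d_def edge_U)
      then show ?thesis unfolding abs_le_iff using fL[of p "X i"] gL[of p "X i"] fL[of p "Y i"] gL[of p "Y i"]
        fN'[of "X i"] gN'[of "X i"] fN'[of "Y i"] gN'[of "Y i"] U I3 by (simp add: Npts_def abs_le_iff)
    qed
  next
    case (V i j)
    show ?thesis
    proof (cases i)
      case I1
      have "d p (X i) = 2" "d p (Y i) = 1" using V I1 by (auto simp: d_def edge_V)
      then show ?thesis unfolding abs_le_iff using fL[of p "X i"] gL[of p "X i"] fL[of p "Y i"] gL[of p "Y i"]
        fN'[of "X i"] gN'[of "X i"] fN'[of "Y i"] gN'[of "Y i"] V I1 by (simp add: Npts_def abs_le_iff)
    next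
      case I2
      have "d p (X i) = 2" "d p (Y i) = 1" using V I2 by (auto simp: d_def edge_V)
      then show ?thesis unfolding abs_le_iff using fL[of p "X i"] gL[of p "X i"] fL[of p "Y i"] gL[of p "Y i"]
        fN'[of "X i"] gN'[of "X i"] fN'[of "Y i"] gN'[of "Y i"] V I2 by (simp add: Npts_def abs_le_iff)
    next
      case I3
      have "d p (X i) = 2" "d p (Y i) = 1" using V I3 by (auto simp: d_def edge_V)
      then show ?thesis unfolding abs_le_iff using fL[of p "X i"] gL[of p "X i"] fL[of p "Y i"] gL[of p "Y i"]
        fN'[of "X i"] gN'[of "X i"] fN'[of "Y i"] gN'[of "Y i"] V I3 by (simp add: Npts_def abs_le_iff)
    qed
  qed
qed



lemma arm_facts:
  assumes "f \<in> Ball0 p0"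
  shows "\<bar>f (U i j) - f (X i)\<bar> \<le> 1" "\<bar>f (U i j) - f (Y i)\<bar> \<le> 2"
    "\<bar>f (V i j) - f (X i)\<bar> \<le> 2" "\<bar>f (V i j) - f (Y i)\<bar> \<le> 1"
    "\<bar>f (U i j) - f (V i j)\<bar> \<le> 1" "\<bar>f (Y i) - f (X (nxt i))\<bar> \<le> 1"
  using Ball0_D[OF assms, of "U i j" "X i"] Ball0_D[OF assms, of "U i j" "Y i"]
    Ball0_D[OF assms, of "V i j" "X i"] Ball0_D[OF assms, of "V i j" "Y i"]
    Ball0_D[OF assms, of "U i j" "V i j"] Ball0_D[OF assms, of "Y i" "X (nxt i)"]
  by (auto simp: d_def edge_U edge_V edge_Y)

lemma WW_edge0:
  assumes f: "f \<in> WW p0" and g: "g \<in> WW p0"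
  shows "\<bar>(f (Y i) - f (X (nxt i))) - (g (Y i) - g (X (nxt i)))\<bar> \<le> 9/5"
    "\<bar>(f (X i) - f (U i j)) - (g (X i) - g (U i j))\<bar> \<le> 9/5"
    "\<bar>(f (U i j) - f (V i j)) - (g (U i j) - g (V i j))\<bar> \<le> 9/5"
    "\<bar>(f (V i j) - f (Y i)) - (g (V i j) - g (Y i))\<bar> \<le> 9/5"
proof -
  let ?t = "\<lambda>p. f0 p - f0 p0"
  have fB: "f \<in> Ball0 p0" and gB: "g \<in> Ball0 p0" using f g by (auto simp: WW_def)
  have fN: "\<And>q. q \<in> Npts \<Longrightarrow> \<bar>f q - ?t q\<bar> < 1/40" using f by (auto simp: WW_def ee_def)
  have gN: "\<And>q. q \<in> Npts \<Longrightarrow> \<bar>g q - ?t q\<bar> < 1/40" using g by (auto simp: WW_def ee_def)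
  have fN': "?t q - 1/40 < f q \<and> f q < ?t q + 1/40" if "q \<in> Npts" for q using fN[OF that] by arith
  have gN': "?t q - 1/40 < g q \<and> g q < ?t q + 1/40" if "q \<in> Npts" for q using gN[OF that] by arith
  have XY: "X i \<in> Npts" "Y i \<in> Npts" "X (nxt i) \<in> Npts" by (cases i; simp add: Npts_def)+
  note A = arm_facts(1-5)[OF fB, where i=i and j=j] arm_facts(1-5)[OF gB, where i=i and j=j]
    arm_facts(6)[OF fB, where i=i] arm_facts(6)[OF gB, where i=i]
    fN'[OF XY(1)] fN'[OF XY(2)] fN'[OF XY(3)] gN'[OF XY(1)] gN'[OF XY(2)] gN'[OF XY(3)]
  show "\<bar>(f (Y i) - f (X (nxt i))) - (g (Y i) - g (X (nxt i)))\<bar> \<le> 9/5"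
    unfolding abs_le_iff using A by (cases i) (simp_all add: abs_le_iff)
  show "\<bar>(f (X i) - f (U i j)) - (g (X i) - g (U i j))\<bar> \<le> 9/5"
    unfolding abs_le_iff using A by (cases i) (simp_all add: abs_le_iff)
  show "\<bar>(f (U i j) - f (V i j)) - (g (U i j) - g (V i j))\<bar> \<le> 9/5"
    unfolding abs_le_iff using A by (cases i) (simp_all add: abs_le_iff)
  show "\<bar>(f (V i j) - f (Y i)) - (g (V i j) - g (Y i))\<bar> \<le> 9/5"
    unfolding abs_le_iff using A by (cases i) (simp_all add: abs_le_iff)
qed

lemma WW_edge:
  assumes f: "f \<in> WW p0" and g: "g \<in> WW p0" and e: "edge p q"
  shows "\<bar>(f p - f q) - (g p - g q)\<bar> \<le> 9/5"
proof -
  have sym: "\<bar>(f p - f q) - (g p - g q)\<bar> = \<bar>(f q - f p) - (g q - g p)\<bar>" by arith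
  note E = WW_edge0[OF f g]
  show ?thesis
  proof (rule edge_cases[OF e])
    fix i assume "p = Y i" "q = X (nxt i)" then show ?thesis using E(1)[of i] by simp
  next
    fix i assume "q = Y i" "p = X (nxt i)" then show ?thesis using E(1)[of i] sym by simp
  next
    fix i j assume "p = X i" "q = U i j" then show ?thesis using E(2)[of i j] by simp
  next
    fix i j assume "q = X i" "p = U i j" then show ?thesis using E(2)[of i j] sym by simp
  next
    fix i j assume "p = U i j" "q = V i j" then show ?thesis using E(3)[of i j] by simp
  next
    fix i j assume "q = U i j" "p = V i j" then show ?thesis using E(3)[of i j] sym by simp
  next
    fix i j assume "p = V i j" "q = Y i" then show ?thesis using E(4)[of i j] by simp
  next
    fix i j assume "q = V i j" "p = Y i" then show ?thesis using E(4)[of i j] sym by simp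
  qed
qed

lemma WW_lip:
  assumes f: "f \<in> WW p0" and g: "g \<in> WW p0"
  shows "\<bar>(f p - g p) - (f q - g q)\<bar> \<le> 9/5 * d p q"
proof (cases "p = q")
  case False
  show ?thesis
  proof (cases "edge p q")
    case True
    have "\<bar>(f p - g p) - (f q - g q)\<bar> = \<bar>(f p - f q) - (g p - g q)\<bar>" by arith
    then show ?thesis using WW_edge[OF f g True] d_edge[OF True] by simp
  next
    case F: False
    have "\<bar>(f p - g p) - (f q - g q)\<bar> \<le> 18/5" using WW_pt[OF f g, of p] WW_pt[OF f g, of q] by arith
    then show ?thesis using d_nonedge[OF False F] by simp
  qed
qed simp

lemma WW_diam: "diam0 (WW p0) \<le> 9/5"
  unfolding diam0_def
proof (rule cSup_least)
  show "{lipnorm (\<lambda>x. f x - g x) |f g. f \<in> WW p0 \<and> g \<in> WW p0} \<noteq> {}" using WW_ne by blast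
next
  fix x assume "x \<in> {lipnorm (\<lambda>x. f x - g x) |f g. f \<in> WW p0 \<and> g \<in> WW p0}"
  then obtain f g where x: "x = lipnorm (\<lambda>x. f x - g x)" and f: "f \<in> WW p0" and g: "g \<in> WW p0" by blast
  show "x \<le> 9/5" unfolding x by (rule lipnorm_le) (use WW_lip[OF f g] in auto)
qed



lemma ev_dual: "is_dual p0 (\<lambda>f. f p)"
  unfolding is_dual_def
proof (intro conjI ballI allI)
  show "\<exists>C. \<forall>f\<in>Lip0 p0. \<bar>f p\<bar> \<le> C * lipnorm f"
  proof (intro exI[of _ 2] ballI)
    fix f assume f: "f \<in> Lip0 p0"
    have "f p0 = 0" using f by (simp add: Lip0_def)
    then have "\<bar>f p\<bar> \<le> lipnorm f * d p p0" using lip_le[OF f, of p p0] by simp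
    also have "\<dots> \<le> lipnorm f * 2" using lipnorm_ge0[OF f] d_le2[of p p0] by (intro mult_left_mono) auto
    finally show "\<bar>f p\<bar> \<le> 2 * lipnorm f" by simp
  qed
qed auto

lemma Ball0_ne: "(\<lambda>x. 0) \<in> Ball0 p0" by (rule Ball0_I) (auto simp: d_ge0)

lemma ev_Free: "(\<lambda>f. f p) \<in> Free p0"
  unfolding Free_def
proof (intro CollectI conjI allI impI ev_dual)
  fix \<epsilon> :: real assume e: "\<epsilon> > 0"
  have sp: "(\<lambda>f. f p) \<in> span_evals" unfolding span_evals_def
    by (rule CollectI, rule exI[of _ "{p}"], rule exI[of _ "\<lambda>_. 1"]) simp
  have "{\<bar>f p - f p\<bar> |f. f \<in> Ball0 p0} = {0}" using Ball0_ne by auto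
  then have "dualnorm p0 (\<lambda>f. f p - f p) = 0" by (simp add: dualnorm_def)
  then show "\<exists>\<psi>\<in>span_evals. dualnorm p0 (\<lambda>f. f p - \<psi> f) < \<epsilon>" using sp e by force
qed

lemma Free_dual: "Free p0 \<subseteq> {\<phi>. is_dual p0 \<phi>}" by (auto simp: Free_def)

lemma WW_open: assumes "(\<lambda>q. \<lambda>f. f q) ` Npts \<subseteq> \<Psi>" shows "rel_open_in_ball p0 \<Psi> (WW p0)"
  unfolding rel_open_in_ball_def
proof (intro conjI ballI)
  show "WW p0 \<subseteq> Ball0 p0" by (auto simp: WW_def)
next
  fix f assume f: "f \<in> WW p0"
  let ?t = "\<lambda>p. f0 p - f0 p0"
  define e' where "e' = Min ((\<lambda>q. ee - \<bar>f q - ?t q\<bar>) ` Npts)"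
  have fin: "finite Npts" "Npts \<noteq> {}" by (auto simp: Npts_def)
  have e'pos: "e' > 0" unfolding e'_def using f fin by (subst Min_gr_iff) (auto simp: WW_def)
  have e'le: "e' \<le> ee - \<bar>f q - ?t q\<bar>" if "q \<in> Npts" for q
    unfolding e'_def using fin that by (intro Min_le) auto
  show "\<exists>\<Phi> \<epsilon>. finite \<Phi> \<and> \<Phi> \<subseteq> \<Psi> \<and> \<epsilon> > 0 \<and> {g \<in> Ball0 p0. \<forall>\<phi>\<in>\<Phi>. \<bar>\<phi> g - \<phi> f\<bar> < \<epsilon>} \<subseteq> WW p0"
  proof (intro exI conjI)
    show "finite ((\<lambda>q. \<lambda>f. f q) ` Npts)" using fin by simp
    show "(\<lambda>q. \<lambda>f. f q) ` Npts \<subseteq> \<Psi>" by fact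
    show "e' > 0" by fact
    show "{g \<in> Ball0 p0. \<forall>\<phi>\<in>(\<lambda>q. \<lambda>f. f q) ` Npts. \<bar>\<phi> g - \<phi> f\<bar> < e'} \<subseteq> WW p0"
    proof
      fix g assume "g \<in> {g \<in> Ball0 p0. \<forall>\<phi>\<in>(\<lambda>q. \<lambda>f. f q) ` Npts. \<bar>\<phi> g - \<phi> f\<bar> < e'}"
      then have g: "g \<in> Ball0 p0" and gq: "\<And>q. q \<in> Npts \<Longrightarrow> \<bar>g q - f q\<bar> < e'" by auto
      have "\<bar>g q - ?t q\<bar> < ee" if "q \<in> Npts" for q
        using gq[OF that] e'le[OF that] by arith
      then show "g \<in> WW p0" using g by (auto simp: WW_def)
    qed
  qed
qed

lemma not_wstar: "\<not> wstar_D2P p0"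
proof -
  have "(\<lambda>q. \<lambda>f. f q) ` Npts \<subseteq> Free p0" using ev_Free by auto
  then have "rel_open_in_ball p0 (Free p0) (WW p0)" by (rule WW_open)
  moreover have "WW p0 \<noteq> {}" using WW_ne by blast
  moreover have "diam0 (WW p0) \<noteq> 2" using WW_diam[of p0] by simp
  ultimately show ?thesis unfolding wstar_D2P_def by blast
qed

lemma not_D2P: "\<not> D2P p0"
proof -
  have "(\<lambda>q. \<lambda>f. f q) ` Npts \<subseteq> {\<phi>. is_dual p0 \<phi>}" using ev_dual by auto
  then have "rel_open_in_ball p0 {\<phi>. is_dual p0 \<phi>} (WW p0)" by (rule WW_open)
  moreover have "WW p0 \<noteq> {}" using WW_ne by blast
  moreover have "diam0 (WW p0) \<noteq> 2" using WW_diam[of p0] by simp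
  ultimately show ?thesis unfolding D2P_def by blast
qed



lemma hermite_step:
  fixes m :: int assumes n: "n > 0"
  shows "(\<Sum>k<n. (m + 1 + int k) div int n) = (\<Sum>k<n. (m + int k) div int n) + 1"
proof -
  define F where "F i = (m + int i) div int n" for i
  have "(\<Sum>i<Suc n. F i) = F 0 + (\<Sum>i<n. F (Suc i))" by (rule sum.lessThan_Suc_shift)
  moreover have "(\<Sum>i<Suc n. F i) = (\<Sum>i<n. F i) + F n" by simp
  moreover have "F n = F 0 + 1" unfolding F_def using n by simp
  ultimately have "(\<Sum>i<n. F (Suc i)) = (\<Sum>i<n. F i) + 1" by linarith
  moreover have "F (Suc i) = (m + 1 + int i) div int n" for i unfolding F_def by (simp add: ac_simps)
  ultimately show ?thesis unfolding F_def by simp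
qed

lemma hermite:
  fixes m :: int assumes n: "n > 0"
  shows "(\<Sum>k<n. (m + int k) div int n) = m"
proof (induction m rule: int_induct[where k=0])
  case base
  have "(\<Sum>k<n. (0 + int k) div int n) = (\<Sum>k<n. 0::int)"
    by (rule sum.cong) auto
  then show ?case by simp
next
  case (step1 i) then show ?case using hermite_step[OF n, of i] by simp
next
  case (step2 i) then show ?case using hermite_step[OF n, of "i - 1"] by simp
qed

lemma floor_div_lip:
  fixes x y :: real and D :: int
  assumes n: "n > 0" and xy: "\<bar>x - y\<bar> \<le> of_int D"
  shows "\<bar>(\<lfloor>real n * x\<rfloor> + k) div int n - (\<lfloor>real n * y\<rfloor> + k) div int n\<bar> \<le> D"
proof -
  have "\<bar>real n * x - real n * y\<bar> \<le> real n * of_int D"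
    using xy n by (simp add: abs_mult right_diff_distrib[symmetric] mult_left_mono)
  then have A: "\<lfloor>real n * x\<rfloor> \<le> \<lfloor>real n * y\<rfloor> + int n * D" "\<lfloor>real n * y\<rfloor> \<le> \<lfloor>real n * x\<rfloor> + int n * D"
    by (simp_all add: abs_le_iff floor_le_iff) linarith+
  have mono: "(a + k) div int n \<le> (b + k) div int n + D" if "a \<le> b + int n * D" for a b
  proof -
    have "(a + k) div int n \<le> (b + k + int n * D) div int n" using that n by (intro zdiv_mono1) auto
    also have "\<dots> = (b + k) div int n + D" using n by simp
    finally show ?thesis .
  qed
  show ?thesis using mono[OF A(1)] mono[OF A(2)] by arith
qed

definition gk :: "nat \<Rightarrow> (pt \<Rightarrow> real) \<Rightarrow> nat \<Rightarrow> pt \<Rightarrow> real" where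
  "gk n f k p = real_of_int ((\<lfloor>real n * f p\<rfloor> + int k) div int n)"

lemma gk_Ball0:
  assumes f: "f \<in> Ball0 p0" and n: "n > 0" and k: "k < n"
  shows "gk n f k \<in> Ball0 p0"
proof (rule Ball0_I)
  have "f p0 = 0" using Ball0_p0[OF f] .
  then show "gk n f k p0 = 0" unfolding gk_def using k by simp
next
  fix p q
  obtain D :: int where D: "d p q = of_int D" using d_cases[of p q]
    by (metis of_int_0 of_int_1 of_int_numeral)
  have "\<bar>f p - f q\<bar> \<le> of_int D" using Ball0_D[OF f, of p q] D by simp
  from floor_div_lip[OF n this, of k]
  show "\<bar>gk n f k p - gk n f k q\<bar> \<le> d p q" unfolding gk_def D
    by (metis of_int_abs of_int_diff of_int_le_iff)
qed

lemma gk_sum: "n > 0 \<Longrightarrow> (\<Sum>k<n. gk n f k p) = of_int \<lfloor>real n * f p\<rfloor>"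
  unfolding gk_def using hermite[of n "\<lfloor>real n * f p\<rfloor>"]
  by (metis of_int_sum)

lemma int_good:
  assumes g: "g \<in> Ball0 p0" and G: "\<And>p. g p = of_int (G p)"
  shows "\<exists>i. \<bar>g (X i) - g (Y i)\<bar> \<le> 1"
proof (rule ccontr)
  assume "\<not> (\<exists>i. \<bar>g (X i) - g (Y i)\<bar> \<le> 1)"
  then have "\<bar>G (X i) - G (Y i)\<bar> > 1" for i using G
    by (metis not_le of_int_abs of_int_diff of_int_less_iff of_int_1)
  then have big: "\<bar>g (X i) - g (Y i)\<bar> \<ge> 2" for i using G
    by (metis of_int_abs of_int_diff of_int_le_iff one_add_one zless_imp_add1_zle of_int_numeral)
  note L = Ball0_D[OF g]
  have "d (Y I1) (X I2) = 1" "d (Y I2) (X I3) = 1" "d (Y I3) (X I1) = 1"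
    "d (Y I2) (X I1) = 2" "d (Y I3) (X I2) = 2" "d (Y I1) (X I3) = 2"
    "d (X I1) (Y I1) = 2" "d (X I2) (Y I2) = 2" "d (X I3) (Y I3) = 2"
    by (simp_all add: d_def edge_Y edge_X)
  then show False using big[of I1] big[of I2] big[of I3]
    L[of "Y I1" "X I2"] L[of "Y I2" "X I3"] L[of "Y I3" "X I1"]
    L[of "Y I2" "X I1"] L[of "Y I3" "X I2"] L[of "Y I1" "X I3"]
    L[of "X I1" "Y I1"] L[of "X I2" "Y I2"] L[of "X I3" "Y I3"]
    by (simp add: abs_le_iff) arith
qed



lemma Lip0_diff: "f \<in> Lip0 p0 \<Longrightarrow> g \<in> Lip0 p0 \<Longrightarrow> (\<lambda>x. f x - g x) \<in> Lip0 p0"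
proof -
  assume "f \<in> Lip0 p0" "g \<in> Lip0 p0"
  then obtain A B where "f p0 = 0" "g p0 = 0" "\<And>p. \<bar>f p\<bar> \<le> A" "\<And>p. \<bar>g p\<bar> \<le> B"
    by (auto simp: Lip0_iff)
  then show ?thesis unfolding Lip0_iff
    by (intro conjI exI[of _ "A + B"]) (auto intro: order_trans[OF abs_triangle_ineq4] add_mono)
qed

lemma Lip0_smult: "f \<in> Lip0 p0 \<Longrightarrow> (\<lambda>x. c * f x) \<in> Lip0 p0"
proof -
  assume "f \<in> Lip0 p0"
  then obtain A where "f p0 = 0" "\<And>p. \<bar>f p\<bar> \<le> A" by (auto simp: Lip0_iff)
  then show ?thesis unfolding Lip0_iff
    by (intro conjI exI[of _ "\<bar>c\<bar> * A"]) (auto simp: abs_mult intro: mult_left_mono)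
qed

lemma Ball0_Lip0: "f \<in> Ball0 p0 \<Longrightarrow> f \<in> Lip0 p0" by (simp add: Ball0_def)

lemma room:
  assumes g: "g \<in> Ball0 p0" and xy: "\<bar>g (X i) - g (Y i)\<bar> \<le> 1"
  shows "\<exists>a. \<bar>a - g (X i)\<bar> \<le> 1/2 \<and> \<bar>a - g (Y i)\<bar> \<le> 1/2 \<and> (\<forall>q. \<bar>a - g q\<bar> \<le> 3/2)"
proof -
  note L = Ball0_D[OF g]
  have L2: "\<bar>g p - g q\<bar> \<le> 2" for p q using L[of p q] d_le2[of p q] by simp
  have bdd: "bdd_above (range g)"
    using L2[of _ p0] Ball0_p0[OF g] by (auto intro!: bdd_aboveI[of _ 2] simp: abs_le_iff)
  define M where "M = Sup (range g)"
  have up: "g q \<le> M" for q unfolding M_def by (rule cSup_upper[OF _ bdd]) simp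
  have lo: "M \<le> g q + 2" for q unfolding M_def
  proof (rule cSup_least)
    show "range g \<noteq> {}" by simp
  next
    fix x assume "x \<in> range g"
    then obtain p where "x = g p" by auto
    then show "x \<le> g q + 2" using L2[of p q] by (simp add: abs_le_iff)
  qed
  define a where "a = max (max (g (X i)) (g (Y i)) - 1/2) (M - 3/2)"
  have a1: "\<bar>a - g (X i)\<bar> \<le> 1/2" unfolding a_def max_def abs_le_iff using xy up[of "X i"] up[of "Y i"] lo[of "X i"] lo[of "Y i"]
    by (auto split: if_splits)
  have a2: "\<bar>a - g (Y i)\<bar> \<le> 1/2" unfolding a_def max_def abs_le_iff using xy up[of "X i"] up[of "Y i"] lo[of "X i"] lo[of "Y i"]
    by (auto split: if_splits)
  have a3: "\<bar>a - g q\<bar> \<le> 3/2" for q unfolding a_def max_def abs_le_iff using xy up[of q] lo[of q] L2[of q "X i"] L2[of q "Y i"]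
    by (auto split: if_splits)
  have "\<bar>a - g (X i)\<bar> \<le> 1/2 \<and> \<bar>a - g (Y i)\<bar> \<le> 1/2 \<and> (\<forall>q. \<bar>a - g q\<bar> \<le> 3/2)"
    using a1 a2 a3 by blast
  then show ?thesis by blast
qed

lemma dU: "q \<noteq> U i j \<Longrightarrow> q \<noteq> V i j \<Longrightarrow> d (U i j) q = (if q = X i then 1 else 2)"
  by (auto simp: d_def edge_U)
lemma dV: "q \<noteq> U i j \<Longrightarrow> q \<noteq> V i j \<Longrightarrow> d (V i j) q = (if q = Y i then 1 else 2)"
  by (auto simp: d_def edge_V)

lemma upd_Ball0:
  assumes g: "g \<in> Ball0 p0" and ax: "\<bar>a - g (X i)\<bar> \<le> 1/2" and ay: "\<bar>a - g (Y i)\<bar> \<le> 1/2"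
    and aq: "\<forall>q. \<bar>a - g q\<bar> \<le> 3/2" and s: "\<bar>s\<bar> \<le> 1/2"
    and pU: "p0 \<noteq> U i j" and pV: "p0 \<noteq> V i j"
  shows "g(U i j := a + s, V i j := a - s) \<in> Ball0 p0"
proof -
  let ?H = "g(U i j := a + s, V i j := a - s)"
  have HU: "?H (U i j) = a + s" and HV: "?H (V i j) = a - s" by auto
  have Ho: "q \<noteq> U i j \<Longrightarrow> q \<noteq> V i j \<Longrightarrow> ?H q = g q" for q by auto
  have dUV: "d (U i j) (V i j) = 1" by (simp add: d_def edge_U)
  have sideU: "\<bar>?H (U i j) - ?H q\<bar> \<le> d (U i j) q" for q
  proof -
    consider "q = U i j" | "q = V i j" | "q \<noteq> U i j" "q \<noteq> V i j" by blast
    then show ?thesis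
    proof cases
      case 1 then show ?thesis by simp
    next
      case 2 then show ?thesis using s dUV by (simp add: HU HV del: fun_upd_apply; arith)
    next
      case 3
      then show ?thesis using ax aq[rule_format, of q] s dU[OF 3] Ho[OF 3]
        by (simp add: HU del: fun_upd_apply; arith)
    qed
  qed
  have sideV: "\<bar>?H (V i j) - ?H q\<bar> \<le> d (V i j) q" for q
  proof -
    consider "q = V i j" | "q = U i j" | "q \<noteq> U i j" "q \<noteq> V i j" by blast
    then show ?thesis
    proof cases
      case 1 then show ?thesis by simp
    next
      case 2 then show ?thesis using s dUV d_sym[of "V i j" "U i j"] by (simp add: HU HV del: fun_upd_apply; arith)
    next
      case 3
      then show ?thesis using ay aq[rule_format, of q] s dV[OF 3] Ho[OF 3]
        by (simp add: HV del: fun_upd_apply; arith)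
    qed
  qed
  show ?thesis
  proof (rule Ball0_I)
    show "?H p0 = 0" using Ho[OF pU pV] Ball0_p0[OF g] by simp
  next
    fix p q
    show "\<bar>?H p - ?H q\<bar> \<le> d p q"
    proof (cases "p = U i j \<or> p = V i j")
      case True
      then show ?thesis
      proof
        assume "p = U i j" then show ?thesis using sideU[of q] by (simp only:)
      next
        assume "p = V i j" then show ?thesis using sideV[of q] by (simp only:)
      qed
    next
      case F1: False
      show ?thesis
      proof (cases "q = U i j \<or> q = V i j")
        case True
        have sym: "\<bar>?H p - ?H q\<bar> = \<bar>?H q - ?H p\<bar>" "d p q = d q p" by (simp_all only: abs_minus_commute d_sym)
        from True show ?thesis
        proof
          assume "q = U i j" then show ?thesis using sideU[of p] sym by (simp only:)
        next
          assume "q = V i j" then show ?thesis using sideV[of p] sym by (simp only:)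
        qed
      next
        case False then show ?thesis using F1 Ball0_D[OF g, of p q] by auto
      qed
    qed
  qed
qed



lemma single_supp: "\<exists>j'. \<forall>j. j \<noteq> j' \<longrightarrow> p \<noteq> U i j \<and> p \<noteq> V i j"
  by (cases p) auto

lemma c0:
  assumes phi: "is_dual p0 \<phi>" and eta: "\<eta> > 0"
    and supp: "\<And>j p. p \<noteq> U i j \<Longrightarrow> p \<noteq> V i j \<Longrightarrow> k1 j p = 0 \<and> k2 j p = 0"
    and bnd: "\<And>j p. \<bar>k1 j p\<bar> \<le> 4 \<and> \<bar>k2 j p\<bar> \<le> 4"
    and lip: "\<And>j. j \<ge> j0 \<Longrightarrow> k1 j \<in> Lip0 p0 \<and> k2 j \<in> Lip0 p0"
  shows "\<exists>j\<ge>j0. \<bar>\<phi> (k1 j)\<bar> < \<eta> \<and> \<bar>\<phi> (k2 j)\<bar> < \<eta>"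
proof (rule ccontr)
  assume no: "\<not> ?thesis"
  obtain C where C0: "C \<ge> 0" and C: "\<forall>f\<in>Lip0 p0. \<bar>\<phi> f\<bar> \<le> C * lipnorm f"
    using dual_bound[OF phi] by blast
  define l where "l j = (if \<bar>\<phi> (k1 j)\<bar> \<ge> \<eta> then k1 j else k2 j)" for j
  have lbig: "\<bar>\<phi> (l j)\<bar> \<ge> \<eta>" if "j \<ge> j0" for j using no that unfolding l_def by force
  have llip: "l j \<in> Lip0 p0" if "j \<ge> j0" for j using lip[OF that] unfolding l_def by auto
  have lsupp: "p \<noteq> U i j \<Longrightarrow> p \<noteq> V i j \<Longrightarrow> l j p = 0" for j p using supp unfolding l_def by auto
  have lbnd: "\<bar>l j p\<bar> \<le> 4" for j p using bnd unfolding l_def by auto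
  define w where "w j = (\<lambda>p. sgn (\<phi> (l j)) * l j p)" for j
  have wlip: "w j \<in> Lip0 p0" if "j \<ge> j0" for j unfolding w_def by (rule Lip0_smult[OF llip[OF that]])
  have wphi: "\<phi> (w j) = \<bar>\<phi> (l j)\<bar>" if "j \<ge> j0" for j
  proof -
    have sa: "sgn x * x = \<bar>x\<bar>" for x :: real by (simp add: sgn_if)
    show ?thesis unfolding w_def using dual_smult[OF phi llip[OF that], of "sgn (\<phi> (l j))"] sa by simp
  qed
  have wsupp: "p \<noteq> U i j \<Longrightarrow> p \<noteq> V i j \<Longrightarrow> w j p = 0" for j p using lsupp unfolding w_def by simp
  have wbnd: "\<bar>w j p\<bar> \<le> 4" for j p
  proof -
    have "\<bar>sgn (\<phi> (l j))\<bar> \<le> 1" by (simp add: abs_sgn_eq)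
    then have "\<bar>w j p\<bar> \<le> 1 * 4" unfolding w_def abs_mult using lbnd[of j p]
      by (intro mult_mono) auto
    then show ?thesis by simp
  qed
  define N :: nat where "N = nat \<lceil>8 * C / \<eta>\<rceil> + 1"
  define J where "J = {j0..<j0 + N}"
  define H where "H = (\<lambda>p. \<Sum>j\<in>J. w j p)"
  have finJ: "finite J" unfolding J_def by simp
  have wJ: "\<forall>j\<in>J. w j \<in> Lip0 p0" unfolding J_def using wlip by auto
  note DS = dual_sum[OF phi finJ wJ]
  have Hlip: "H \<in> Lip0 p0" using DS unfolding H_def by simp
  have "\<phi> H = (\<Sum>j\<in>J. \<phi> (w j))" using DS unfolding H_def by simp
  also have "\<dots> \<ge> (\<Sum>j\<in>J. \<eta>)" unfolding J_def using wphi lbig by (intro sum_mono) auto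
  finally have lowH: "\<phi> H \<ge> real N * \<eta>" unfolding J_def by simp
  have Hbnd: "\<bar>H p\<bar> \<le> 4" for p
  proof -
    obtain j' where j': "\<And>j. j \<noteq> j' \<Longrightarrow> p \<noteq> U i j \<and> p \<noteq> V i j" using single_supp[of p i] by blast
    have "H p = (\<Sum>j\<in>J. if j = j' then w j' p else 0)" unfolding H_def
      by (rule sum.cong) (auto dest: j' intro: wsupp)
    also have "\<dots> = (if j' \<in> J then w j' p else 0)" using finJ by simp
    finally show ?thesis using wbnd[of j' p] by simp
  qed
  have "lipnorm H \<le> 8"
  proof (rule lipnorm_le)
    fix p q :: pt assume "p \<noteq> q"
    then have "d p q \<ge> 1" by (rule d_ge1)
    moreover have "\<bar>H p - H q\<bar> \<le> 8" using Hbnd[of p] Hbnd[of q] by arith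
    ultimately show "\<bar>H p - H q\<bar> \<le> 8 * d p q" by linarith
  qed
  then have "\<bar>\<phi> H\<bar> \<le> C * 8" using C Hlip C0 by (meson mult_left_mono order_trans)
  moreover have "real N * \<eta> > 8 * C"
  proof -
    have "real N > 8 * C / \<eta>" unfolding N_def by linarith
    then show ?thesis using eta by (simp add: divide_less_eq mult.commute)
  qed
  ultimately show False using lowH by linarith
qed



lemma diam2:
  assumes S: "S \<subseteq> Ball0 p0" and f1: "f1 \<in> S" and f2: "f2 \<in> S" and l: "lipnorm (\<lambda>x. f1 x - f2 x) = 2"
  shows "diam0 S = 2"
  unfolding diam0_def
proof (rule cSup_eq_maximum)
  show "2 \<in> {lipnorm (\<lambda>x. f x - g x) |f g. f \<in> S \<and> g \<in> S}" using f1 f2 l by force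
next
  fix x assume "x \<in> {lipnorm (\<lambda>x. f x - g x) |f g. f \<in> S \<and> g \<in> S}"
  then obtain f g where x: "x = lipnorm (\<lambda>x. f x - g x)" and f: "f \<in> Ball0 p0" and g: "g \<in> Ball0 p0"
    using S by blast
  show "x \<le> 2" unfolding x
  proof (rule lipnorm_le)
    fix p q
    show "\<bar>(f p - g p) - (f q - g q)\<bar> \<le> 2 * d p q"
      using Ball0_D[OF f, of p q] Ball0_D[OF g, of p q] by arith
  qed
qed

lemma LD2P_holds: "LD2P p0"
  unfolding LD2P_def
proof (intro allI impI, elim conjE)
  fix \<phi> :: "(pt \<Rightarrow> real) \<Rightarrow> real" and \<alpha> :: real
  assume phi: "is_dual p0 \<phi>" and n1: "dualnorm p0 \<phi> = 1" and a: "\<alpha> > 0"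
  obtain f where f: "f \<in> Ball0 p0" and phif: "\<phi> f > 1 - \<alpha>/4"
    using dual_abs_le[OF phi n1, of "\<alpha>/4"] a by auto
  obtain C where C0: "C \<ge> 0" and C: "\<forall>f\<in>Lip0 p0. \<bar>\<phi> f\<bar> \<le> C * lipnorm f"
    using dual_bound[OF phi] by blast
  define n :: nat where "n = nat \<lceil>4 * C / \<alpha>\<rceil> + 1"
  have n0: "n > 0" unfolding n_def by simp
  have nbig: "real n > 4 * C / \<alpha>" unfolding n_def by linarith
  have rn: "real n > 0" using n0 by simp
  have f0: "f p0 = 0" by (rule Ball0_p0[OF f])
  have gkB: "gk n f k \<in> Ball0 p0" if "k < n" for k by (rule gk_Ball0[OF f n0 that])
  have gkL: "\<forall>k\<in>{..<n}. gk n f k \<in> Lip0 p0" using gkB Ball0_Lip0 by auto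
  note DS = dual_sum[OF phi _ gkL]
  define Fn where "Fn = (\<lambda>p. (1 / real n) * (\<Sum>k<n. gk n f k p))"
  define e where "e = (\<lambda>p. f p - Fn p)"
  have FnL: "Fn \<in> Lip0 p0" unfolding Fn_def by (rule Lip0_smult) (use DS in simp)
  have phiFn: "\<phi> Fn = (1 / real n) * (\<Sum>k<n. \<phi> (gk n f k))"
    unfolding Fn_def using dual_smult[OF phi conjunct1[OF DS[OF finite_lessThan]], of "1 / real n"]
      conjunct2[OF DS[OF finite_lessThan]] by simp
  have Fnp: "Fn p = of_int \<lfloor>real n * f p\<rfloor> / real n" for p
    unfolding Fn_def using gk_sum[OF n0, of f p] by simp
  have eb: "0 \<le> e p \<and> e p \<le> 1 / real n" for p
  proof -
    define z where "z = real_of_int \<lfloor>real n * f p\<rfloor>"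
    have z1: "z \<le> real n * f p" "real n * f p \<le> z + 1"
      unfolding z_def using floor_correct[of "real n * f p"] by auto
    have A: "z / real n \<le> f p" using z1(1) rn by (simp add: divide_le_eq mult.commute)
    have B: "f p \<le> (z + 1) / real n" using z1(2) rn by (simp add: le_divide_eq mult.commute)
    have C: "(z + 1) / real n = z / real n + 1 / real n" by (simp add: add_divide_distrib)
    show ?thesis unfolding e_def Fnp z_def[symmetric] using A B C by linarith
  qed
  have ep0: "e p0 = 0" unfolding e_def Fnp f0 by simp
  have eL: "e \<in> Lip0 p0" unfolding Lip0_iff using ep0 eb
    by (intro conjI exI[of _ "1 / real n"]) (auto simp: abs_le_iff)
  have "lipnorm e \<le> 1 / real n"
  proof (rule lipnorm_le)
    fix p q :: pt assume "p \<noteq> q"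
    then have "d p q \<ge> 1" by (rule d_ge1)
    then have "1 / real n * 1 \<le> 1 / real n * d p q" using rn by (intro mult_left_mono) auto
    moreover have "\<bar>e p - e q\<bar> \<le> 1 / real n" using eb[of p] eb[of q] by arith
    ultimately show "\<bar>e p - e q\<bar> \<le> 1 / real n * d p q" by simp
  qed
  then have "\<bar>\<phi> e\<bar> \<le> C * (1 / real n)" using C eL C0 by (meson mult_left_mono order_trans)
  moreover have "C * (1 / real n) < \<alpha> / 4"
    using nbig rn a by (simp add: field_simps)
  ultimately have phie: "\<bar>\<phi> e\<bar> < \<alpha>/4" by linarith
  have "f = (\<lambda>x. Fn x + e x)" unfolding e_def by simp
  then have "\<phi> f = \<phi> Fn + \<phi> e" using dual_add[OF phi FnL eL] by simp
  then have "\<phi> Fn > 1 - \<alpha>/2" using phif phie by linarith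
  then have "\<exists>k<n. \<phi> (gk n f k) > 1 - \<alpha>/2"
  proof (rule contrapos_pp)
    assume "\<not> (\<exists>k<n. \<phi> (gk n f k) > 1 - \<alpha>/2)"
    then have "(\<Sum>k<n. \<phi> (gk n f k)) \<le> (\<Sum>k<n. 1 - \<alpha>/2)" by (intro sum_mono) auto
    then have "(\<Sum>k<n. \<phi> (gk n f k)) \<le> real n * (1 - \<alpha>/2)" by simp
    then show "\<not> \<phi> Fn > 1 - \<alpha>/2" unfolding phiFn using rn by (simp add: field_simps)
  qed
  then obtain k where kn: "k < n" and phig: "\<phi> (gk n f k) > 1 - \<alpha>/2" by blast
  define g where "g = gk n f k"
  have gB: "g \<in> Ball0 p0" unfolding g_def by (rule gkB[OF kn])
  have gL: "g \<in> Lip0 p0" by (rule Ball0_Lip0[OF gB])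
  obtain i where gi: "\<bar>g (X i) - g (Y i)\<bar> \<le> 1"
    using int_good[OF gB, of "\<lambda>p. (\<lfloor>real n * f p\<rfloor> + int k) div int n"] unfolding g_def gk_def by blast
  obtain av where ax: "\<bar>av - g (X i)\<bar> \<le> 1/2" and ay: "\<bar>av - g (Y i)\<bar> \<le> 1/2" and aq: "\<forall>q. \<bar>av - g q\<bar> \<le> 3/2"
    using room[OF gB gi] by blast
  define j0 where "j0 = (case p0 of U _ m \<Rightarrow> Suc m | V _ m \<Rightarrow> Suc m | _ \<Rightarrow> 0)"
  have pj: "p0 \<noteq> U i j \<and> p0 \<noteq> V i j" if "j \<ge> j0" for j
    using that unfolding j0_def by (cases p0) auto
  define Gp where "Gp j = g(U i j := av + 1/2, V i j := av - 1/2)" for j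
  define Gm where "Gm j = g(U i j := av + (-1/2), V i j := av - (-1/2))" for j
  have GpB: "Gp j \<in> Ball0 p0" if "j \<ge> j0" for j
    unfolding Gp_def using pj[OF that] by (intro upd_Ball0[OF gB ax ay aq]) auto
  have GmB: "Gm j \<in> Ball0 p0" if "j \<ge> j0" for j
    unfolding Gm_def using pj[OF that] by (intro upd_Ball0[OF gB ax ay aq]) auto
  define k1 where "k1 j = (\<lambda>p. Gp j p - g p)" for j
  define k2 where "k2 j = (\<lambda>p. Gm j p - g p)" for j
  have "\<exists>j\<ge>j0. \<bar>\<phi> (k1 j)\<bar> < \<alpha>/2 \<and> \<bar>\<phi> (k2 j)\<bar> < \<alpha>/2"
  proof (rule c0[OF phi, of "\<alpha>/2" i])
    show "\<alpha>/2 > 0" using a by simp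
  next
    fix j p assume "p \<noteq> U i j" "p \<noteq> V i j"
    then show "k1 j p = 0 \<and> k2 j p = 0" unfolding k1_def k2_def Gp_def Gm_def by simp
  next
    fix j p
    have "\<bar>av - g (U i j)\<bar> \<le> 3/2" "\<bar>av - g (V i j)\<bar> \<le> 3/2" using aq by auto
    then show "\<bar>k1 j p\<bar> \<le> 4 \<and> \<bar>k2 j p\<bar> \<le> 4" unfolding k1_def k2_def Gp_def Gm_def
      by (auto simp: abs_le_iff; arith)
  next
    fix j assume "j \<ge> j0"
    then show "k1 j \<in> Lip0 p0 \<and> k2 j \<in> Lip0 p0" unfolding k1_def k2_def
      using Lip0_diff[OF Ball0_Lip0[OF GpB] gL] Lip0_diff[OF Ball0_Lip0[OF GmB] gL] by auto
  qed
  then obtain j where j: "j \<ge> j0" and s1: "\<bar>\<phi> (k1 j)\<bar> < \<alpha>/2" and s2: "\<bar>\<phi> (k2 j)\<bar> < \<alpha>/2" by blast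
  have k1L: "k1 j \<in> Lip0 p0" unfolding k1_def by (rule Lip0_diff[OF Ball0_Lip0[OF GpB[OF j]] gL])
  have k2L: "k2 j \<in> Lip0 p0" unfolding k2_def by (rule Lip0_diff[OF Ball0_Lip0[OF GmB[OF j]] gL])
  have "Gp j = (\<lambda>x. g x + k1 j x)" unfolding k1_def by simp
  then have "\<phi> (Gp j) = \<phi> g + \<phi> (k1 j)" using dual_add[OF phi gL k1L] by simp
  then have pGp: "\<phi> (Gp j) > 1 - \<alpha>" using phig s1 unfolding g_def by linarith
  have "Gm j = (\<lambda>x. g x + k2 j x)" unfolding k2_def by simp
  then have "\<phi> (Gm j) = \<phi> g + \<phi> (k2 j)" using dual_add[OF phi gL k2L] by simp
  then have pGm: "\<phi> (Gm j) > 1 - \<alpha>" using phig s2 unfolding g_def by linarith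
  have DL: "(\<lambda>x. Gp j x - Gm j x) \<in> Lip0 p0" by (rule Lip0_diff[OF Ball0_Lip0[OF GpB[OF j]] Ball0_Lip0[OF GmB[OF j]]])
  have "lipnorm (\<lambda>x. Gp j x - Gm j x) = 2"
  proof (rule antisym)
    show "lipnorm (\<lambda>x. Gp j x - Gm j x) \<le> 2"
    proof (rule lipnorm_le)
      fix p q
      show "\<bar>(Gp j p - Gm j p) - (Gp j q - Gm j q)\<bar> \<le> 2 * d p q"
        using Ball0_D[OF GpB[OF j], of p q] Ball0_D[OF GmB[OF j], of p q] by arith
    qed
  next
    have "\<bar>(Gp j (U i j) - Gm j (U i j)) - (Gp j (V i j) - Gm j (V i j))\<bar> \<le> lipnorm (\<lambda>x. Gp j x - Gm j x) * d (U i j) (V i j)"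
      using lip_le[OF DL, of "U i j" "V i j"] by simp
    moreover have "d (U i j) (V i j) = 1" by (simp add: d_def edge_U)
    ultimately show "2 \<le> lipnorm (\<lambda>x. Gp j x - Gm j x)" unfolding Gp_def Gm_def by simp
  qed
  then show "diam0 {f \<in> Ball0 p0. \<phi> f > 1 - \<alpha>} = 2"
    by (intro diam2[of _ p0 "Gp j" "Gm j"]) (use GpB[OF j] GmB[OF j] pGp pGm in auto)
qed

theorem mainTheorem17:
  fixes p0 :: pt
  shows "LD2P p0 \<and> \<not> wstar_D2P p0 \<and> \<not> D2P p0"
  using LD2P_holds not_wstar not_D2P by blast


end
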